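(* Let $A$ and $A'$ be semisimple elements in $\mathrm{Sp}(n,1)$. Then $A=A'$ if and only if they have the same real trace, the same projective fixed points and the same point on each of the eigenvalue Grassmannians.
   Context: $\mathrm{Sp}(n,1)$ is the isometry group of a Hermitian form of signature $(n,1)$ on $\mathbb H^{n,1}$. Real trace: writing $A=A_1+{\bf j}A_2$ with complex $A_1,A_2$, $A_{\mathbb C}=\begin{pmatrix}A_1&-\overline{A_2}\\ A_2&\overline{A_1}\end{pmatrix}\in\mathrm{GL}(2n+2,\mathbb C)$ has characteristic polynomial $\sum_{j=0}^{2n+2}a_jx^{2n+2-j}$ and the real trace is $(a_1,\ldots,a_n)$. If ${\bf x}$ is an eigenvector for an eigenvalue $\lambda$ of $A$, its image $x\in\mathbb H\mathbb P^n$ is a projective fixed point of $A$ for the similarity class $[\lambda]$; two semisimple elements with the same eigenvalue classes have the same projective fixed points if for each non-real class they have the same projective fixed point (i.e. the chosen eigenvectors of $A'$ are right quaternionic multiples of those of $A$). For a non-real eigenvalue class $[\lambda]$ of multiplicity $m$ with representative $\lambda$, the eigenset $\{x:Ax=x\lambda\}$ is a complex $m$-dimensional subspace of the $[\lambda]$-eigenspace $\cong\mathbb C^{2m}$; the set of eigensets is the complex Grassmannian $G_{m,2m}$ (the $[\lambda]$-eigenvalue Grassmannian), and $A,A'$ have the same point on it if they have the same eigenset for the representative $\lambda$. *)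

theory Defs
  imports Complex_Main "Jordan_Normal_Form.Char_Poly"
begin

text \<open>Quat a b stands for the quaternion a + j b (a, b complex; j z = conj z j).\<close>
datatype quat = Quat (qa: complex) (qb: complex)

definition qzero :: quat where "qzero = Quat 0 0"
definition qone :: quat where "qone = Quat 1 0"
definition qadd :: "quat \<Rightarrow> quat \<Rightarrow> quat" where
  "qadd p q = Quat (qa p + qa q) (qb p + qb q)"
text \<open>(a + j b)(c + j d) = (a c - conj b d) + j (conj a d + b c)\<close>
definition qmult :: "quat \<Rightarrow> quat \<Rightarrow> quat" where
  "qmult p q = Quat (qa p * qa q - cnj (qb p) * qb q) (cnj (qa p) * qb q + qb p * qa q)"
definition qconj :: "quat \<Rightarrow> quat" where
  "qconj q = Quat (cnj (qa q)) (- qb q)"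
definition qnormsq :: "quat \<Rightarrow> real" where
  "qnormsq q = (cmod (qa q))\<^sup>2 + (cmod (qb q))\<^sup>2"
definition qinv :: "quat \<Rightarrow> quat" where
  "qinv q = Quat (cnj (qa q) / complex_of_real (qnormsq q)) (- qb q / complex_of_real (qnormsq q))"
definition qreal :: "quat \<Rightarrow> bool" where
  "qreal q \<longleftrightarrow> qb q = 0 \<and> Im (qa q) = 0"
definition qof_real :: "real \<Rightarrow> quat" where
  "qof_real r = Quat (complex_of_real r) 0"

definition qsimilar :: "quat \<Rightarrow> quat \<Rightarrow> bool" where
  "qsimilar l \<mu> \<longleftrightarrow> (\<exists>r. r \<noteq> qzero \<and> \<mu> = qmult (qinv r) (qmult l r))"

definition qsum :: "nat \<Rightarrow> (nat \<Rightarrow> quat) \<Rightarrow> quat" where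
  "qsum N f = Quat (\<Sum>k<N. qa (f k)) (\<Sum>k<N. qb (f k))"

section \<open>Quaternionic vectors and matrices of size N = n+1 (indices 0..n)\<close>

type_synonym qvec = "nat \<Rightarrow> quat"
type_synonym qmat = "nat \<Rightarrow> nat \<Rightarrow> quat"

definition qvecs :: "nat \<Rightarrow> qvec set" where
  "qvecs N = {x. \<forall>i. N \<le> i \<longrightarrow> x i = qzero}"
definition qmats :: "nat \<Rightarrow> qmat set" where
  "qmats N = {A. \<forall>i j. (N \<le> i \<or> N \<le> j) \<longrightarrow> A i j = qzero}"

definition qzerovec :: qvec where "qzerovec = (\<lambda>_. qzero)"

definition qmat_vec :: "nat \<Rightarrow> qmat \<Rightarrow> qvec \<Rightarrow> qvec" where
  "qmat_vec N A x = (\<lambda>i. qsum N (\<lambda>k. qmult (A i k) (x k)))"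

definition qvec_smul :: "qvec \<Rightarrow> quat \<Rightarrow> qvec" where
  "qvec_smul x q = (\<lambda>i. qmult (x i) q)"

definition qmat_mult :: "nat \<Rightarrow> qmat \<Rightarrow> qmat \<Rightarrow> qmat" where
  "qmat_mult N A B = (\<lambda>i j. qsum N (\<lambda>k. qmult (A i k) (B k j)))"

definition qmat_adj :: "qmat \<Rightarrow> qmat" where
  "qmat_adj A = (\<lambda>i j. qconj (A j i))"

text \<open>The Hermitian form of signature (n,1) on H^(n,1): J = diag(1,...,1,-1).\<close>
definition Jform :: "nat \<Rightarrow> qmat" where
  "Jform n = (\<lambda>i j. if i = j \<and> i < n then qone
                     else if i = j \<and> i = n then qof_real (-1) else qzero)"

definition Sp :: "nat \<Rightarrow> qmat set" where
  "Sp n = {A \<in> qmats (Suc n).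
             qmat_mult (Suc n) (qmat_adj A) (qmat_mult (Suc n) (Jform n) A) = Jform n}"

definition qindep :: "nat \<Rightarrow> nat \<Rightarrow> (nat \<Rightarrow> qvec) \<Rightarrow> bool" where
  "qindep N m v \<longleftrightarrow> (\<forall>c. (\<lambda>i. qsum m (\<lambda>k. qmult (v k i) (c k))) = qzerovec
                         \<longrightarrow> (\<forall>k<m. c k = qzero))"

text \<open>semisimple = diagonalizable: there is a basis of (right) eigenvectors\<close>
definition semisimple :: "nat \<Rightarrow> qmat \<Rightarrow> bool" where
  "semisimple N A \<longleftrightarrow> (\<exists>v \<mu>. (\<forall>k<N. v k \<in> qvecs N \<and>
          qmat_vec N A (v k) = qvec_smul (v k) (\<mu> k)) \<and> qindep N N v)"

text \<open>A = A1 + j A2 gives A_C = [[A1, -conj A2], [A2, conj A1]] of size 2N\<close>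
definition complexify :: "nat \<Rightarrow> qmat \<Rightarrow> complex mat" where
  "complexify N A = mat (2*N) (2*N) (\<lambda>(i,j).
      if i < N \<and> j < N then qa (A i j)
      else if i < N then - cnj (qb (A i (j - N)))
      else if j < N then qb (A (i - N) j)
      else cnj (qa (A (i - N) (j - N))))"

text \<open>char. polynomial of A_C is sum_j a_j x^(2n+2-j); real trace = (a_1,...,a_n)\<close>
definition real_trace :: "nat \<Rightarrow> qmat \<Rightarrow> complex list" where
  "real_trace n A = map (\<lambda>j. coeff (char_poly (complexify (Suc n) A)) (2*n+2-j)) [1..<Suc n]"

text \<open>the point of HP^n determined by a nonzero vector x (its right line minus 0)\<close>
definition qproj :: "qvec \<Rightarrow> qvec set" where
  "qproj x = {qvec_smul x q | q. q \<noteq> qzero}"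

definition is_eigvec :: "nat \<Rightarrow> qmat \<Rightarrow> qvec \<Rightarrow> quat \<Rightarrow> bool" where
  "is_eigvec N A x l \<longleftrightarrow> x \<in> qvecs N \<and> x \<noteq> qzerovec \<and> qmat_vec N A x = qvec_smul x l"

definition proj_fixed_points :: "nat \<Rightarrow> qmat \<Rightarrow> quat \<Rightarrow> qvec set set" where
  "proj_fixed_points N A \<mu> = {qproj x | x. \<exists>l. qsimilar \<mu> l \<and> is_eigvec N A x l}"

definition same_proj_fixed_points :: "nat \<Rightarrow> qmat \<Rightarrow> qmat \<Rightarrow> bool" where
  "same_proj_fixed_points n A A' \<longleftrightarrow>
     (\<forall>\<mu>. proj_fixed_points (Suc n) A \<mu> = proj_fixed_points (Suc n) A' \<mu>)"

definition eigenset :: "nat \<Rightarrow> qmat \<Rightarrow> quat \<Rightarrow> qvec set" where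
  "eigenset N A l = {x \<in> qvecs N. qmat_vec N A x = qvec_smul x l}"

text \<open>same point on the [lambda]-eigenvalue Grassmannian for every non-real
  eigenvalue class of A (for every representative lambda)\<close>
definition same_grassmannian_points :: "nat \<Rightarrow> qmat \<Rightarrow> qmat \<Rightarrow> bool" where
  "same_grassmannian_points n A A' \<longleftrightarrow>
     (\<forall>l. \<not> qreal l \<longrightarrow> (\<exists>x. is_eigvec (Suc n) A x l) \<longrightarrow>
          eigenset (Suc n) A l = eigenset (Suc n) A' l)"

end

theory Submission
  imports Defs
begin

lemma qmult_assoc: "qmult (qmult p q) r = qmult p (qmult q r)"
  by (simp add: qmult_def algebra_simps)

lemma qmult_zero_left[simp]: "qmult qzero q = qzero" by (simp add: qmult_def qzero_def)
lemma qmult_one_left[simp]: "qmult qone q = q" by (simp add: qmult_def qone_def)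
lemma qmult_one_right[simp]: "qmult q qone = q" by (simp add: qmult_def qone_def)

lemma qinv_left: assumes "r \<noteq> qzero" shows "qmult (qinv r) r = qone"
proof -
  obtain a b where r: "r = Quat a b" by (cases r)
  have nz: "qnormsq r \<noteq> 0" using assms r
    by (auto simp: qnormsq_def qzero_def add_nonneg_eq_0_iff)
  have e: "a * cnj a + b * cnj b = complex_of_real (qnormsq r)"
    using r by (simp only: qnormsq_def of_real_add complex_norm_square) (simp add: mult.commute)
  have "a * cnj a / complex_of_real (qnormsq r) + b * cnj b / complex_of_real (qnormsq r) = 1"
    using nz by (simp add: add_divide_distrib[symmetric] e)
  then show ?thesis using r
    by (simp add: qmult_def qinv_def qone_def algebra_simps)
qed

lemma qreal_comm: assumes "qreal l" shows "qmult l q = qmult q l"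
proof -
  have "qa l = complex_of_real (Re (qa l))" using assms by (simp add: qreal_def complex_eqI)
  then show ?thesis using assms
    by (cases l; cases q) (simp add: qreal_def qmult_def; metis complex_cnj_complex_of_real mult.commute)
qed

lemma qsum_mult_right: "qmult (qsum N f) q = qsum N (\<lambda>k. qmult (f k) q)"
  by (simp add: qsum_def qmult_def sum_distrib_right sum_subtractf sum.distrib)

lemma qmat_vec_smul: "qmat_vec N A (qvec_smul x q) = qvec_smul (qmat_vec N A x) q"
  by (simp add: qmat_vec_def qvec_smul_def qsum_mult_right qmult_assoc)

lemma qvec_smul_assoc: "qvec_smul (qvec_smul x p) q = qvec_smul x (qmult p q)"
  by (simp add: qvec_smul_def qmult_assoc)

lemma qsimilar_refl: "qsimilar l l"
  unfolding qsimilar_def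
  by (rule exI[of _ qone]) (simp add: qone_def qzero_def qinv_def qnormsq_def qmult_def)

lemma qsimilar_real: assumes "qreal l" "qsimilar l l'" shows "l' = l"
proof -
  obtain r where r: "r \<noteq> qzero" "l' = qmult (qinv r) (qmult l r)" using assms(2) qsimilar_def by auto
  have "qmult l r = qmult r l" using qreal_comm[OF assms(1)] .
  then show ?thesis using r qinv_left[OF r(1)] by (simp flip: qmult_assoc)
qed

lemma sum_split2: "(\<Sum>j<N + (M::nat). f j) = (\<Sum>j<N. f j) + (\<Sum>k<M. f (N + k))"
  by (induction M) (simp_all add: add.assoc)


lemma eig_transfer:
  assumes P: "same_proj_fixed_points n A A'" and G: "same_grassmannian_points n A A'"
    and E: "is_eigvec (Suc n) A x l"
  shows "qmat_vec (Suc n) A' x = qvec_smul x l"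
proof (cases "qreal l")
  case True
  have "qproj x \<in> proj_fixed_points (Suc n) A l"
    using E qsimilar_refl unfolding proj_fixed_points_def by blast
  then have "qproj x \<in> proj_fixed_points (Suc n) A' l" using P same_proj_fixed_points_def by auto
  then obtain x' l' where x': "qproj x = qproj x'" "qsimilar l l'" "is_eigvec (Suc n) A' x' l'"
    unfolding proj_fixed_points_def by blast
  have l': "l' = l" using qsimilar_real[OF True x'(2)] .
  have "x \<in> qproj x"
    unfolding qproj_def
    by (rule CollectI, rule exI[of _ qone]) (simp add: qvec_smul_def qzero_def qone_def[symmetric], simp add: qone_def)
  then obtain q where q: "x = qvec_smul x' q" using x'(1) unfolding qproj_def by auto
  have "qmat_vec (Suc n) A' x = qvec_smul (qvec_smul x' l) q"
    using q x'(3) l' by (simp add: qmat_vec_smul is_eigvec_def)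
  also have "\<dots> = qvec_smul x l"
    using q by (simp add: qvec_smul_assoc qreal_comm[OF True])
  finally show ?thesis .
next
  case False
  then have "eigenset (Suc n) A l = eigenset (Suc n) A' l" using G E same_grassmannian_points_def by blast
  moreover have "x \<in> eigenset (Suc n) A l" using E by (simp add: eigenset_def is_eigvec_def)
  ultimately show ?thesis by (simp add: eigenset_def)
qed


definition qj :: quat where "qj = Quat 0 1"
definition phv :: "nat \<Rightarrow> qvec \<Rightarrow> nat \<Rightarrow> complex" where
  "phv N x j = (if j < N then qa (x j) else qb (x (j - N)))"

lemma complexify_act:
  assumes r: "r < 2 * N"
  shows "(\<Sum>j<2*N. complexify N B $$ (r, j) * phv N x j) = phv N (qmat_vec N B x) r"
proof -
  have "(\<Sum>j<2*N. complexify N B $$ (r, j) * phv N x j)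
      = (\<Sum>j<N. complexify N B $$ (r, j) * phv N x j) + (\<Sum>k<N. complexify N B $$ (r, N + k) * phv N x (N + k))"
    using sum_split2[of _ N N] by (simp add: mult_2)
  also have "\<dots> = phv N (qmat_vec N B x) r"
  proof (cases "r < N")
    case True
    then show ?thesis using r
      by (simp add: complexify_def phv_def qmat_vec_def qsum_def qmult_def sum_subtractf sum_negf)
  next
    case False
    then show ?thesis using r
      by (simp add: complexify_def phv_def qmat_vec_def qsum_def qmult_def sum.distrib algebra_simps)
  qed
  finally show ?thesis .
qed


lemma core:
  assumes ind: "qindep N N v" and vq: "\<And>k. k < N \<Longrightarrow> v k \<in> qvecs N"
    and eq: "\<And>k. k < N \<Longrightarrow> qmat_vec N A (v k) = qmat_vec N A' (v k)"
    and AQ: "A \<in> qmats N" and AQ': "A' \<in> qmats N"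
  shows "A = A'"
proof -
  define w where "w c = (if c < N then v c else qvec_smul (v (c - N)) qj)" for c
  define V where "V = mat (2*N) (2*N) (\<lambda>(j,c). phv N (w c) j)"
  have V: "V \<in> carrier_mat (2*N) (2*N)" by (simp add: V_def)
  have Aw: "qmat_vec N A (w c) = qmat_vec N A' (w c)" if "c < 2 * N" for c
    using eq that by (cases "c < N") (simp_all add: w_def qmat_vec_smul)
  have coef: "(V *\<^sub>v c) $ i = phv N (\<lambda>i. qsum N (\<lambda>k. qmult (v k i) (Quat (c $ k) (c $ (N + k))))) i"
    if c: "c \<in> carrier_vec (2*N)" and i: "i < 2*N" for c i
  proof -
    have "(V *\<^sub>v c) $ i = (\<Sum>j<2*N. V $$ (i, j) * c $ j)"
      using c i V by (simp add: scalar_prod_def atLeast0LessThan)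
    also have "\<dots> = (\<Sum>j<N. V $$ (i, j) * c $ j) + (\<Sum>k<N. V $$ (i, N + k) * c $ (N + k))"
      using sum_split2[of _ N N] by (simp add: mult_2)
    also have "\<dots> = phv N (\<lambda>i. qsum N (\<lambda>k. qmult (v k i) (Quat (c $ k) (c $ (N + k))))) i"
      using i by (cases "i < N")
        (simp_all add: V_def w_def phv_def qsum_def qmult_def qvec_smul_def qj_def sum.distrib
           sum_subtractf sum_negf algebra_simps)
    finally show ?thesis .
  qed
  have inj: "c = 0\<^sub>v (2*N)" if c: "c \<in> carrier_vec (2*N)" and z: "V *\<^sub>v c = 0\<^sub>v (2*N)" for c
  proof -
    define e where "e k = Quat (c $ k) (c $ (N + k))" for k
    have s0: "qsum N (\<lambda>k. qmult (v k i) (e k)) = qzero" for i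
    proof (cases "i < N")
      case True
      have "(V *\<^sub>v c) $ i = 0" "(V *\<^sub>v c) $ (N + i) = 0" using z True by auto
      then show ?thesis using coef[OF c, of i] coef[OF c, of "N+i"] True
        by (simp add: phv_def e_def qzero_def quat.expand)
    next
      case False
      have "v k i = qzero" if "k < N" for k using vq[OF that] False by (simp add: qvecs_def)
      then show ?thesis by (simp add: qsum_def qzero_def qmult_def)
    qed
    have "(\<lambda>i. qsum N (\<lambda>k. qmult (v k i) (e k))) = qzerovec"
      using s0 by (simp add: qzerovec_def)
    then have ek: "\<forall>k<N. e k = qzero" using ind qindep_def by blast
    show ?thesis
    proof (rule eq_vecI)
      fix i assume "i < dim_vec (0\<^sub>v (2 * N))"
      then have i: "i < 2*N" by simp
      show "c $ i = 0\<^sub>v (2 * N) $ i"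
      proof (cases "i < N")
        case True then show ?thesis using ek i by (auto simp: e_def qzero_def)
      next
        case False
        then have "i - N < N" "N + (i - N) = i" using i by auto
        then show ?thesis using ek[rule_format, of "i - N"] i by (auto simp: e_def qzero_def)
      qed
    qed (use c in simp)
  qed
  have "det V \<noteq> 0" using det_0_iff_vec_prod_zero[OF V] inj by blast
  then have dT: "det (transpose_mat V) \<noteq> 0" using det_transpose[OF V] by simp
  have VT: "transpose_mat V \<in> carrier_mat (2*N) (2*N)" using V by simp
  have CC: "complexify N A $$ (r, j) = complexify N A' $$ (r, j)" if r: "r < 2*N" and j: "j < 2*N" for r j
  proof -
    define u where "u = vec (2*N) (\<lambda>j. complexify N A $$ (r, j) - complexify N A' $$ (r, j))"
    have u: "u \<in> carrier_vec (2*N)" by (simp add: u_def)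
    have "transpose_mat V *\<^sub>v u = 0\<^sub>v (2*N)"
    proof (rule eq_vecI)
      fix c assume "c < dim_vec (0\<^sub>v (2 * N))"
      then have c: "c < 2*N" by simp
      have "(transpose_mat V *\<^sub>v u) $ c = (\<Sum>j<2*N. V $$ (j, c) * u $ j)"
        using c V by (simp add: scalar_prod_def atLeast0LessThan u_def)
      also have "\<dots> = (\<Sum>j<2*N. complexify N A $$ (r, j) * phv N (w c) j)
                    - (\<Sum>j<2*N. complexify N A' $$ (r, j) * phv N (w c) j)"
        using c by (simp add: V_def u_def algebra_simps flip: sum_subtractf)
      also have "\<dots> = 0" using complexify_act[OF r] Aw[OF c] by simp
      finally show "(transpose_mat V *\<^sub>v u) $ c = 0\<^sub>v (2 * N) $ c" using c by simp
    qed (use VT in simp)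
    then have "u = 0\<^sub>v (2*N)" using det_0_iff_vec_prod_zero[OF VT] dT u by blast
    then have "u $ j = 0" using j by simp
    then show ?thesis using j by (simp add: u_def)
  qed
  show ?thesis
  proof (rule ext, rule ext)
    fix i j
    show "A i j = A' i j"
    proof (cases "i < N \<and> j < N")
      case True
      have "qa (A i j) = qa (A' i j)" using CC[of i j] True by (simp add: complexify_def)
      moreover have "qb (A i j) = qb (A' i j)" using CC[of "N + i" j] True by (simp add: complexify_def)
      ultimately show ?thesis by (simp add: quat.expand)
    next
      case False
      then show ?thesis using AQ AQ' by (auto simp: qmats_def)
    qed
  qed
qed


lemma indep_nonzero:
  assumes "qindep N N v" "k < N" shows "v k \<noteq> qzerovec"
proof
  assume z: "v k = qzerovec"
  define c where "c k' = (if k' = k then qone else qzero)" for k'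
  have "(\<lambda>i. qsum N (\<lambda>k'. qmult (v k' i) (c k'))) = qzerovec"
  proof
    fix i
    have "qmult (v k' i) (c k') = qzero" if "k' < N" for k'
      using z by (cases "k' = k") (simp_all add: c_def qzerovec_def qmult_def qzero_def)
    then show "qsum N (\<lambda>k'. qmult (v k' i) (c k')) = qzerovec i"
      by (simp add: qsum_def qzerovec_def qzero_def)
  qed
  then have "c k = qzero" using assms qindep_def by blast
  then show False by (simp add: c_def qone_def qzero_def)
qed

theorem proposition4p3:
  fixes n :: nat and A A' :: qmat
  assumes "A \<in> Sp n" and "A' \<in> Sp n"
    and "semisimple (Suc n) A" and "semisimple (Suc n) A'"
  shows "A = A' \<longleftrightarrow>
           real_trace n A = real_trace n A' \<and>
           same_proj_fixed_points n A A' \<and>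
           same_grassmannian_points n A A'"
proof
  assume "A = A'"
  then show "real_trace n A = real_trace n A' \<and> same_proj_fixed_points n A A' \<and>
           same_grassmannian_points n A A'"
    by (simp add: same_proj_fixed_points_def same_grassmannian_points_def)
next
  assume h: "real_trace n A = real_trace n A' \<and> same_proj_fixed_points n A A' \<and>
           same_grassmannian_points n A A'"
  obtain v \<mu> where v: "\<forall>k<Suc n. v k \<in> qvecs (Suc n) \<and>
          qmat_vec (Suc n) A (v k) = qvec_smul (v k) (\<mu> k)" "qindep (Suc n) (Suc n) v"
    using assms(3) semisimple_def by blast
  show "A = A'"
  proof (rule core[OF v(2)])
    fix k assume k: "k < Suc n"
    show "v k \<in> qvecs (Suc n)" using v k by blast
    have "is_eigvec (Suc n) A (v k) (\<mu> k)"
      using v k indep_nonzero[OF v(2) k] by (simp add: is_eigvec_def)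
    then have "qmat_vec (Suc n) A' (v k) = qvec_smul (v k) (\<mu> k)"
      using eig_transfer h by blast
    then show "qmat_vec (Suc n) A (v k) = qmat_vec (Suc n) A' (v k)" using v k by simp
  next
    show "A \<in> qmats (Suc n)" using assms(1) by (simp add: Sp_def)
    show "A' \<in> qmats (Suc n)" using assms(2) by (simp add: Sp_def)
  qed
qed

end
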